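(* Let $\Bbbk$ be a field of characteristic $2$, $G=\langle\sigma\rangle$ cyclic of order $4$ acting on $V=V_3$ with $\sigma x_1=x_1+x_2$, $\sigma x_2=x_2+x_3$, $\sigma x_3=x_3$ on the dual basis, and $A=\Bbbk[N^G(x_1),\ x_2(x_2+x_3),\ x_3]$ with $N^G(x_1)=\prod_{i=0}^3\sigma^i(x_1)$. Then $K_4=\ker(\Delta^4)=\Bbbk[V]$ is a free $A$-module with basis $\{1,\ x_1,\ x_2,\ x_1^2,\ x_1x_2,\ x_1^3,\ x_1^2x_2,\ x_1^3x_2\}$.
   Context: $\Delta=\sigma-\iota\in\Bbbk G$ acting on $\Bbbk[V]=\Bbbk[x_1,x_2,x_3]$; note $\Delta^4=\sigma^4-\iota=0$ in characteristic $2$. *)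

theory Defs
  imports "HOL-Computational_Algebra.Polynomial"
begin

text \<open>The polynomial ring k[x1,x2,x3] is modelled as 'k poly poly poly:
  the innermost variable is x1, the middle one x2, the outermost one x3.\<close>

type_synonym 'k mpoly3 = "'k poly poly poly"

definition cst3 :: "'k::comm_ring_1 \<Rightarrow> 'k mpoly3" where
  "cst3 c = [:[:[:c:]:]:]"

definition X1 :: "'k::comm_ring_1 mpoly3" where "X1 = [:[:[:0, 1:]:]:]"
definition X2 :: "'k::comm_ring_1 mpoly3" where "X2 = [:[:0, 1:]:]"
definition X3 :: "'k::comm_ring_1 mpoly3" where "X3 = [:0, 1:]"

definition subst3 :: "'k::comm_ring_1 mpoly3 \<Rightarrow> 'k mpoly3 \<Rightarrow> 'k mpoly3 \<Rightarrow> 'k mpoly3 \<Rightarrow> 'k mpoly3" where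
  "subst3 p a b c =
     poly (map_poly (\<lambda>q. poly (map_poly (\<lambda>r. poly (map_poly cst3 r) a) q) b) p) c"

definition sigma :: "'k::comm_ring_1 mpoly3 \<Rightarrow> 'k mpoly3" where
  "sigma p = subst3 p (X1 + X2) (X2 + X3) X3"

definition Delta :: "'k::comm_ring_1 mpoly3 \<Rightarrow> 'k mpoly3" where
  "Delta p = sigma p - p"

definition K :: "nat \<Rightarrow> 'k::comm_ring_1 mpoly3 set" where
  "K n = {p. (Delta ^^ n) p = 0}"

definition norm_x1 :: "'k::comm_ring_1 mpoly3" where
  "norm_x1 = (\<Prod>i<4. (sigma ^^ i) X1)"

inductive_set gen_alg :: "'k::comm_ring_1 mpoly3 \<Rightarrow> 'k mpoly3 \<Rightarrow> 'k mpoly3 \<Rightarrow> 'k mpoly3 set"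
  for f g h where
  cst: "cst3 c \<in> gen_alg f g h"
| gen1: "f \<in> gen_alg f g h"
| gen2: "g \<in> gen_alg f g h"
| gen3: "h \<in> gen_alg f g h"
| add: "p \<in> gen_alg f g h \<Longrightarrow> q \<in> gen_alg f g h \<Longrightarrow> p + q \<in> gen_alg f g h"
| mult: "p \<in> gen_alg f g h \<Longrightarrow> q \<in> gen_alg f g h \<Longrightarrow> p * q \<in> gen_alg f g h"

definition algA :: "'k::comm_ring_1 mpoly3 set" where
  "algA = gen_alg norm_x1 (X2 * (X2 + X3)) X3"

definition basis8 :: "'k::comm_ring_1 mpoly3 list" where
  "basis8 = [1, X1, X2, X1^2, X1 * X2, X1^3, X1^2 * X2, X1^3 * X2]"

end

theory Submission
  imports Defs
begin


definition is_hom :: "('a::comm_ring_1 \<Rightarrow> 'b::comm_ring_1) \<Rightarrow> bool" where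
  "is_hom g \<longleftrightarrow> (\<forall>x y. g (x + y) = g x + g y) \<and> (\<forall>x y. g (x * y) = g x * g y) \<and> g 0 = 0 \<and> g 1 = 1"

lemma is_homD:
  assumes "is_hom g"
  shows "g (x + y) = g x + g y" "g (x * y) = g x * g y" "g 0 = 0" "g 1 = 1"
  using assms unfolding is_hom_def by auto

lemma is_hom_minus: assumes "is_hom g" shows "g (- x) = - g x" "g (x - y) = g x - g y"
proof -
  have "g (- x) + g x = 0" using is_homD(1)[OF assms, of "-x" x] is_homD(3)[OF assms] by simp
  thus "g (- x) = - g x" by (simp add: eq_neg_iff_add_eq_0)
  have "g (- y) + g y = 0" using is_homD(1)[OF assms, of "-y" y] is_homD(3)[OF assms] by simp
  thus "g (x - y) = g x - g y" using is_homD(1)[OF assms, of x "-y"] by (simp add: eq_neg_iff_add_eq_0)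
qed

lemma is_hom_pow: assumes "is_hom g" shows "g (x ^ n) = g x ^ n"
  by (induction n) (simp_all add: is_homD[OF assms])

lemma is_hom_sum: assumes "is_hom g" shows "g (sum f A) = (\<Sum>i\<in>A. g (f i))"
  by (induction A rule: infinite_finite_induct) (simp_all add: is_homD[OF assms])

lemma is_hom_prod: assumes "is_hom g" shows "g (prod f A) = (\<Prod>i\<in>A. g (f i))"
  by (induction A rule: infinite_finite_induct) (simp_all add: is_homD[OF assms])

lemma is_hom_comp: "is_hom f \<Longrightarrow> is_hom g \<Longrightarrow> is_hom (f \<circ> g)"
  unfolding is_hom_def by simp

lemma is_hom_const: "is_hom (\<lambda>x. [:x:])"
  unfolding is_hom_def by simp

lemma map_poly_add_hom: assumes "is_hom g"
  shows "map_poly g (p + q) = map_poly g p + map_poly g q"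
  by (rule poly_eqI) (simp add: coeff_map_poly is_homD[OF assms])

lemma eval_hom:
  assumes g: "is_hom g"
  shows "is_hom (\<lambda>p. poly (map_poly g p) x)"
proof -
  have g0: "g 0 = 0" by (rule is_homD[OF g])
  have mult: "poly (map_poly g (p * q)) x = poly (map_poly g p) x * poly (map_poly g q) x" for p q
  proof (induction p)
    case 0 then show ?case by simp
  next
    case (pCons a p)
    have "map_poly g (smult a q) = smult (g a) (map_poly g q)"
      by (rule map_poly_smult) (simp_all add: is_homD[OF g])
    then show ?case using pCons
      by (simp add: map_poly_add_hom[OF g] map_poly_pCons[of g, OF g0] algebra_simps g0)
  qed
  show ?thesis unfolding is_hom_def
    by (simp add: map_poly_add_hom[OF g] mult g0 is_homD[OF g] map_poly_1)
qed

lemma eval_comm: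
  assumes phi: "is_hom \<phi>" and g0: "g 0 = 0"
  shows "\<phi> (poly (map_poly g p) x) = poly (map_poly (\<phi> \<circ> g) p) (\<phi> x)"
proof (induction p)
  case 0 then show ?case by (simp add: is_homD[OF phi])
next
  case (pCons a p)
  have h: "(\<lambda>a. \<phi> (g a)) 0 = 0" using g0 is_homD[OF phi] by simp
  show ?case using pCons
    by (simp add: map_poly_pCons[of g, OF g0] map_poly_pCons[of "\<lambda>a. \<phi> (g a)", OF h] is_homD[OF phi] g0)
qed

lemma cst3_hom: "is_hom (cst3 :: 'k::comm_ring_1 \<Rightarrow> 'k mpoly3)"
  unfolding is_hom_def cst3_def by (simp add: one_pCons)

lemma subst3_hom: "is_hom (\<lambda>p::'k::comm_ring_1 mpoly3. subst3 p a b c)"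
  unfolding subst3_def
  by (intro eval_hom cst3_hom)

definition E1 :: "'k::comm_ring_1 mpoly3 \<Rightarrow> 'k poly \<Rightarrow> 'k mpoly3" where
  "E1 a r = poly (map_poly cst3 r) a"
definition E2 :: "'k::comm_ring_1 mpoly3 \<Rightarrow> 'k mpoly3 \<Rightarrow> 'k poly poly \<Rightarrow> 'k mpoly3" where
  "E2 a b q = poly (map_poly (E1 a) q) b"

lemma E1_hom: "is_hom (E1 a)"
  unfolding E1_def[abs_def] by (intro eval_hom cst3_hom)
lemma E2_hom: "is_hom (E2 a b)"
  unfolding E2_def[abs_def] by (intro eval_hom E1_hom)
lemma subst3_alt: "subst3 p a b c = poly (map_poly (E2 a b) p) c"
  unfolding subst3_def E2_def[abs_def] E1_def[abs_def] by simp

lemma subst3_comm: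
  assumes phi: "is_hom \<phi>" and cst: "\<And>r. \<phi> (cst3 r) = cst3 r"
  shows "\<phi> (subst3 p a b c) = subst3 p (\<phi> a) (\<phi> b) (\<phi> c)"
proof -
  have c0: "cst3 0 = 0" by (simp add: cst3_def)
  have 1: "\<phi> \<circ> E1 a = E1 (\<phi> a)"
  proof
    fix r show "(\<phi> \<circ> E1 a) r = E1 (\<phi> a) r"
      unfolding E1_def using eval_comm[OF phi, of cst3 r a] c0 cst
      by (simp add: comp_def)
  qed
  have 2: "\<phi> \<circ> E2 a b = E2 (\<phi> a) (\<phi> b)"
  proof
    fix q show "(\<phi> \<circ> E2 a b) q = E2 (\<phi> a) (\<phi> b) q"
      unfolding E2_def using eval_comm[OF phi, of "E1 a", OF is_homD(3)[OF E1_hom], of q b] 1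
      by simp
  qed
  show ?thesis unfolding subst3_alt
    using eval_comm[OF phi, of "E2 a b", OF is_homD(3)[OF E2_hom], of p c] 2 by simp
qed

lemma subst3_cst [simp]: "subst3 (cst3 r) a b c = cst3 r"
  by (simp add: subst3_def map_poly_pCons cst3_def)
lemma subst3_X1 [simp]: "subst3 X1 a b c = a"
  by (simp add: subst3_def map_poly_pCons cst3_def X1_def one_pCons[symmetric])
lemma subst3_X2 [simp]: "subst3 X2 a b c = b"
  by (simp add: subst3_def map_poly_pCons cst3_def X2_def one_pCons[symmetric])
lemma subst3_X3 [simp]: "subst3 X3 a b c = c"
  by (simp add: subst3_def map_poly_pCons cst3_def X3_def one_pCons[symmetric])

lemma subst3_id: "subst3 p X1 X2 X3 = (p :: 'k::comm_ring_1 mpoly3)"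
proof -
  have a: "E1 X1 r = [:[:r:]:]" for r :: "'k poly"
  proof -
    have h: "is_hom (\<lambda>x::'k poly. [:[:x:]:] :: 'k mpoly3)"
      using is_hom_comp[OF is_hom_const is_hom_const] by (simp add: comp_def)
    have "[:[:r:]:] = (\<lambda>x. [:[:x:]:] :: 'k mpoly3) (poly (map_poly (\<lambda>x. [:x:]) r) [:0,1:])"
      by (simp add: pcompose_altdef[symmetric])
    also have "\<dots> = E1 X1 r"
      unfolding E1_def X1_def by (subst eval_comm[OF h]) (simp_all add: comp_def cst3_def[abs_def])
    finally show ?thesis by simp
  qed
  have b: "E2 X1 X2 q = [:q:]" for q :: "'k poly poly"
  proof -
    have e: "E1 (X1 :: 'k mpoly3) = (\<lambda>r. [:[:r:]:])" by (intro ext a)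
    have "[:q:] = (\<lambda>x. [:x:] :: 'k mpoly3) (poly (map_poly (\<lambda>x. [:x:]) q) [:0,1:])"
      by (simp add: pcompose_altdef[symmetric])
    also have "\<dots> = E2 X1 X2 q"
      unfolding E2_def X2_def e by (subst eval_comm[OF is_hom_const]) (simp_all add: comp_def)
    finally show ?thesis by simp
  qed
  have e: "E2 (X1 :: 'k mpoly3) X2 = (\<lambda>q. [:q:])" by (intro ext b)
  show ?thesis unfolding subst3_alt e X3_def by (simp add: pcompose_altdef[symmetric])
qed



lemma char2_k: assumes "CHAR('k::comm_ring_1) = 2" shows "(2::'k) = 0"
  using of_nat_CHAR[where 'a='k] assms by simp

lemma char2: assumes "CHAR('k::comm_ring_1) = 2" shows "(x::'k mpoly3) + x = 0"
proof -
  have "(2::'k mpoly3) = 0" by (simp add: numeral_poly char2_k[OF assms])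
  then show ?thesis by (metis mult_2 mult_zero_left)
qed

lemma char2': assumes "CHAR('k::comm_ring_1) = 2" shows "(x::'k mpoly3) + (x + y) = y"
  using char2[OF assms, of x] by (metis add.assoc add_0)

lemma char2_neg: assumes "CHAR('k::comm_ring_1) = 2" shows "- (x::'k mpoly3) = x"
  using char2[OF assms, of x] by (metis add_eq_0_iff)

lemma sigma_hom: "is_hom (sigma :: 'k::comm_ring_1 mpoly3 \<Rightarrow> _)"
  unfolding sigma_def[abs_def] by (rule subst3_hom)

lemma sigma_cst [simp]: "sigma (cst3 r) = cst3 r" by (simp add: sigma_def)
lemma sigma_X [simp]: "sigma X1 = X1 + X2" "sigma X2 = X2 + X3" "sigma X3 = X3"
  by (simp_all add: sigma_def)

lemma sigma_subst: "sigma (subst3 p a b c) = subst3 p (sigma a) (sigma b) (sigma c)"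
  by (rule subst3_comm[OF sigma_hom sigma_cst])

lemma sigma_add: "sigma (x + y) = sigma x + sigma y"
  by (rule is_homD(1)[OF sigma_hom])

lemma sigma4: assumes "CHAR('k::comm_ring_1) = 2"
  shows "sigma (sigma (sigma (sigma (p :: 'k mpoly3)))) = p"
proof -
  have "sigma (sigma (sigma (sigma (subst3 p X1 X2 X3)))) = subst3 p X1 X2 X3"
    by (simp add: sigma_subst sigma_add char2[OF assms] char2'[OF assms] ac_simps)
  then show ?thesis by (simp add: subst3_id)
qed

lemma K4: assumes "CHAR('k::comm_ring_1) = 2" shows "K 4 = (UNIV :: 'k mpoly3 set)"
proof -
  have D: "Delta p = sigma p + p" for p :: "'k mpoly3"
    by (simp add: Delta_def char2_neg[OF assms])
  have "(Delta ^^ 4) p = 0" for p :: "'k mpoly3"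
    by (simp add: eval_nat_numeral D sigma_add sigma4[OF assms] char2[OF assms] char2'[OF assms] ac_simps)
  then show ?thesis by (auto simp: K_def)
qed

definition swap :: "'k::comm_ring_1 mpoly3 \<Rightarrow> 'k mpoly3" where
  "swap p = subst3 p X3 X2 X1"

lemma swap_hom: "is_hom (swap :: 'k::comm_ring_1 mpoly3 \<Rightarrow> _)"
  unfolding swap_def[abs_def] by (rule subst3_hom)
lemma swap_cst [simp]: "swap (cst3 r) = cst3 r" by (simp add: swap_def)
lemma swap_X [simp]: "swap X1 = X3" "swap X2 = X2" "swap X3 = X1"
  by (simp_all add: swap_def)
lemma swap_swap [simp]: "swap (swap p) = p"
proof -
  have "swap (swap p) = subst3 p (swap X3) (swap X2) (swap X1)"
    unfolding swap_def[of p] by (rule subst3_comm[OF swap_hom swap_cst])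
  then show ?thesis by (simp add: subst3_id)
qed



definition rep :: "'a::comm_ring_1 poly \<Rightarrow> nat \<Rightarrow> (nat \<Rightarrow> 'a poly) \<Rightarrow> 'a poly" where
  "rep f d q = (\<Sum>a<d. [:0,1:]^a * pcompose (q a) f)"

lemma xpow_const: "[:0,1:]^a * [:c:] = monom c a"
  by (simp add: monom_altdef)

lemma coeff_lowsum:
  "coeff (\<Sum>a<d. [:0,1:]^a * [:c a:]) n = (if n < d then c n else 0)"
  by (simp add: monom_altdef[symmetric] coeff_sum coeff_monom)

lemma degree_lowsum: "d > 0 \<Longrightarrow> degree (\<Sum>a<d. [:0,1:]^a * [:c a:]) < d"
proof -
  assume "d > 0"
  have "degree (\<Sum>a<d. [:0,1:]^a * [:c a:]) \<le> d - 1"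
    by (rule degree_sum_le) (auto simp: monom_altdef[symmetric] intro: order.trans[OF degree_monom_le])
  then show ?thesis using \<open>d > 0\<close> by linarith
qed

lemma rep_exists:
  fixes f :: "'a::idom poly"
  assumes monic: "lead_coeff f = 1" and d: "degree f = d" "d > 0"
  shows "\<exists>q. p = rep f d q"
proof (induction "degree p" arbitrary: p rule: less_induct)
  case less
  show ?case
  proof (cases "degree p < d")
    case True
    have "p = (\<Sum>a<d. [:0,1:]^a * pcompose [:coeff p a:] f)"
    proof (rule poly_eqI)
      fix n
      show "coeff p n = coeff (\<Sum>a<d. [:0,1:]^a * pcompose [:coeff p a:] f) n"
        using coeff_lowsum[where d=d and c="\<lambda>a. coeff p a" and n=n] True coeff_eq_0[of p n]
        by (auto simp del: pcompose_const simp: pcompose_const[of _ f])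
    qed
    then show ?thesis unfolding rep_def by (rule exI[where x="\<lambda>a. [:coeff p a:]"])
  next
    case False
    define n where "n = degree p"
    define c where "c = lead_coeff p"
    define k where "k = n div d"
    define a where "a = n mod d"
    have "n > 0" using False d n_def by linarith
    then have "p \<noteq> 0" using n_def by auto
    then have "c \<noteq> 0" using c_def by auto
    have ad: "a < d" using d a_def by simp
    define g where "g = [:0,1:]^a * pcompose (monom c k) f"
    have f0: "f \<noteq> 0" using monic by auto
    have dg: "degree g = n"
      unfolding g_def using \<open>c \<noteq> 0\<close> f0 d
      by (simp add: degree_mult_eq degree_pcompose degree_monom_eq degree_linear_power
           pcompose_eq_0_iff a_def k_def del: pCons_0_0 One_nat_def) 
    have lg: "lead_coeff g = c"
      unfolding g_def using d \<open>c \<noteq> 0\<close> monic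
      by (simp add: lead_coeff_mult lead_coeff_power lead_coeff_comp monic degree_monom_eq del: pCons_0_0 One_nat_def)
    have "degree (p - g) < n"
    proof (cases "p - g = 0")
      case True then show ?thesis using \<open>n > 0\<close> by simp
    next
      case False
      have le: "degree (p - g) \<le> n" using dg n_def by (simp add: degree_diff_le)
      have "coeff (p - g) n = 0" using lg dg c_def n_def by simp
      then have "degree (p - g) \<noteq> n" using False by (metis leading_coeff_0_iff)
      then show ?thesis using le by simp
    qed
    then obtain q' where q': "p - g = rep f d q'" using less n_def by blast
    define q where "q = (\<lambda>i. q' i + (if i = a then monom c k else 0))"
    have "rep f d q = rep f d q' + g"
      unfolding rep_def q_def g_def
      by (simp add: pcompose_add distrib_left sum.distrib ad if_distrib[of "\<lambda>x. pcompose x f"]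
          if_distrib[of "\<lambda>x. _ * x"] cong: if_cong)
    then have "p = rep f d q" using q' by (simp add: algebra_simps)
    then show ?thesis by blast
  qed
qed

lemma rep_unique:
  fixes f :: "'a::idom poly"
  assumes monic: "lead_coeff f = 1" and d: "degree f = d" "d > 0"
    and z: "rep f d q = 0" and ad: "a < d"
  shows "q a = 0"
proof -
  have main: "\<forall>q. (\<forall>a<d. q a \<noteq> 0 \<longrightarrow> degree (q a) < n) \<longrightarrow> rep f d q = 0 \<longrightarrow> (\<forall>a<d. q a = 0)" for n
  proof (induction n)
    case 0 then show ?case by auto
  next
    case (Suc n)
    show ?case
    proof (rule allI, rule impI, rule impI)
      fix q :: "nat \<Rightarrow> 'a poly"
      assume deg: "\<forall>a<d. q a \<noteq> 0 \<longrightarrow> degree (q a) < Suc n" and z: "rep f d q = 0"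
      define c where "c a = coeff (q a) 0" for a
      define q' where "q' a = poly_shift 1 (q a)" for a
      have qa: "q a = pCons (c a) (q' a)" for a
        unfolding c_def q'_def by (rule poly_eqI) (simp add: coeff_pCons coeff_poly_shift split: nat.split)
      define r where "r = (\<Sum>a<d. [:0,1:]^a * [:c a:])"
      have "rep f d q = r + f * rep f d q'"
        unfolding rep_def r_def
        by (subst qa) (simp add: pcompose_pCons distrib_left sum.distrib sum_distrib_left ac_simps)
      then have e: "f * rep f d q' = - r" using z by (simp add: eq_neg_iff_add_eq_0 add.commute)
      have dr: "degree r < d" unfolding r_def by (rule degree_lowsum[OF d(2)])
      have "rep f d q' = 0"
      proof (rule ccontr)
        assume "rep f d q' \<noteq> 0"
        then have "degree (f * rep f d q') \<ge> d" using d monic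
          by (subst degree_mult_eq) auto
        then show False using e dr by simp
      qed
      then have "r = 0" using e by simp
      then have c0: "c a = 0" if "a < d" for a
        using coeff_lowsum[where d=d and c=c and n=a] that unfolding r_def by simp
      have "\<forall>a<d. q' a \<noteq> 0 \<longrightarrow> degree (q' a) < n"
      proof (intro allI impI)
        fix a assume "a < d" "q' a \<noteq> 0"
        then have "degree (q a) = Suc (degree (q' a))" using qa[of a] c0 by simp
        then show "degree (q' a) < n" using deg \<open>a < d\<close> by fastforce
      qed
      then have "\<forall>a<d. q' a = 0" using Suc.IH \<open>rep f d q' = 0\<close> by blast
      then show "\<forall>a<d. q a = 0" using qa c0 by simp
    qed
  qed
  show "q a = 0"
    using z ad main[of "Suc (Max ((\<lambda>a. degree (q a)) ` {..<d}))"] by (auto simp: le_imp_less_Suc)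
qed



lemma ga_0 [simp]: "0 \<in> gen_alg f g h"
  using gen_alg.cst[of 0 f g h] by (simp add: cst3_def)
lemma ga_1 [simp]: "1 \<in> gen_alg f g h"
  using gen_alg.cst[of 1 f g h] by (simp add: cst3_def one_pCons)
lemma ga_neg: "p \<in> gen_alg f g h \<Longrightarrow> - p \<in> gen_alg f g h"
proof -
  assume "p \<in> gen_alg f g h"
  moreover have "cst3 (-1) = - (1 :: 'k::comm_ring_1 mpoly3)" by (simp add: cst3_def one_pCons)
  ultimately show ?thesis using gen_alg.mult[OF gen_alg.cst[of "-1"], of p f g h] by (metis mult_minus1)
qed
lemma ga_diff: "p \<in> gen_alg f g h \<Longrightarrow> q \<in> gen_alg f g h \<Longrightarrow> p - q \<in> gen_alg f g h"
  using gen_alg.add[OF _ ga_neg] by (metis diff_conv_add_uminus)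

lemma ga_hom:
  assumes "is_hom \<phi>" "\<And>r. \<phi> (cst3 r) = cst3 r"
  shows "p \<in> gen_alg f g h \<Longrightarrow> \<phi> p \<in> gen_alg (\<phi> f) (\<phi> g) (\<phi> h)"
  by (induction rule: gen_alg.induct)
     (simp_all add: assms is_homD[OF assms(1)] gen_alg.intros)

definition Hq :: "'k::comm_ring_1 poly poly" where
  "Hq = [:0,1:] * [:[:0,1:], 1:]"

lemma Hq_monic: "lead_coeff (Hq :: 'k::idom poly poly) = 1" "degree (Hq :: 'k::idom poly poly) = 2"
  unfolding Hq_def by (simp_all add: lead_coeff_mult degree_mult_eq)

lemma swap_h: "swap (X2 * (X2 + X3)) = ([:Hq:] :: 'k::comm_ring_1 mpoly3)"
  by (simp only: is_homD[OF swap_hom] swap_X) (simp add: Hq_def X1_def X2_def X3_def)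

lemma lin_step:
  fixes p :: "'a::idom poly"
  assumes "lead_coeff p = 1"
  shows "lead_coeff (p * [:c,1:]) = 1" "degree (p * [:c,1:]) = degree p + 1"
proof -
  have q: "[:c,1:] \<noteq> 0" "lead_coeff [:c,1:] = 1" "degree [:c,1:] = 1" by simp_all
  have p: "p \<noteq> 0" using assms by auto
  show "lead_coeff (p * [:c,1:]) = 1" by (simp only: lead_coeff_mult assms q(2) mult_1)
  show "degree (p * [:c,1:]) = degree p + 1" by (simp only: degree_mult_eq[OF p q(1)] q(3))
qed

definition Nsw :: "'k::comm_ring_1 mpoly3" where "Nsw = swap norm_x1"

lemma Nsw_eq: assumes "CHAR('k::comm_ring_1) = 2"
  shows "(Nsw :: 'k mpoly3) = 1 * [:0,1:] * [:[:0,1:],1:] * [:[:[:0,1:]:],1:] * [:[:0,1:] + [:[:0,1:]:],1:]"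
proof -
  have f1: "(sigma ^^ 1) X1 = (X1 + X2 :: 'k mpoly3)" by simp
  have f2: "(sigma ^^ 2) X1 = (X1 + X3 :: 'k mpoly3)"
    by (simp add: numeral_2_eq_2 sigma_add add.assoc char2'[OF assms])
  have f3: "(sigma ^^ 3) X1 = (X1 + X2 + X3 :: 'k mpoly3)"
    by (simp add: numeral_3_eq_3 sigma_add add.assoc char2'[OF assms])
  have "{..<4::nat} = {0,1,2,3}" by auto
  then have "(norm_x1 :: 'k mpoly3) = X1 * ((X1 + X2) * ((X1 + X3) * (X1 + X2 + X3)))"
    unfolding norm_x1_def by (simp add: f1 f2 f3 del: funpow.simps One_nat_def)
  note nx = this
  have "(Nsw :: 'k mpoly3) = X3 * ((X3 + X2) * ((X3 + X1) * (X3 + X2 + X1)))"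
    unfolding Nsw_def nx by (simp only: is_homD(1,2)[OF swap_hom] swap_X)
  also have "\<dots> = 1 * [:0,1:] * [:[:0,1:],1:] * [:[:[:0,1:]:],1:] * [:[:0,1:] + [:[:0,1:]:],1:]"
    unfolding X1_def X2_def X3_def mult_1 mult.assoc by simp
  finally show ?thesis .
qed

lemma Nsw_monic: assumes "CHAR('k::field) = 2"
  shows "lead_coeff (Nsw :: 'k mpoly3) = 1" "degree (Nsw :: 'k mpoly3) = 4"
proof -
  let ?u = "[:0,1:] :: 'k poly poly" and ?v = "[:[:0,1:]:] :: 'k poly poly"
  have l0: "lead_coeff (1 :: 'k mpoly3) = 1" "degree (1 :: 'k mpoly3) = 0" by simp_all
  note s1 = lin_step[OF l0(1), of 0]
  note s2 = lin_step[OF s1(1), of ?u]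
  note s3 = lin_step[OF s2(1), of ?v]
  note s4 = lin_step[OF s3(1), of "?u + ?v"]
  show "lead_coeff (Nsw :: 'k mpoly3) = 1" "degree (Nsw :: 'k mpoly3) = 4"
     apply (unfold Nsw_eq[OF assms])
     apply (rule s4(1))
    apply (unfold s4(2) s3(2) s2(2) s1(2) l0(2))
    apply simp
    done
qed



lemma ga_sum: "(\<And>i. i \<in> A \<Longrightarrow> f i \<in> gen_alg a b c) \<Longrightarrow> sum f A \<in> gen_alg a b c"
  by (induction A rule: infinite_finite_induct) (auto intro: gen_alg.add)

lemma ga_cst2: "[:[:c:]:] \<in> gen_alg f g (X1 :: 'k::comm_ring_1 mpoly3)"
proof (induction c)
  case 0 then show ?case using ga_0 by simp
next
  case (pCons a c)
  have eq: "[:[:pCons a c:]:] = cst3 a + X1 * [:[:c:]:]"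
    by (simp add: cst3_def X1_def)
  show ?case unfolding eq by (rule gen_alg.add[OF gen_alg.cst gen_alg.mult[OF gen_alg.gen3 pCons.IH]])
qed

lemma ga_H: "[:pcompose s Hq:] \<in> gen_alg f [:Hq:] (X1 :: 'k::comm_ring_1 mpoly3)"
proof (induction s)
  case 0 then show ?case using ga_0 by simp
next
  case (pCons c s)
  have eq: "[:pcompose (pCons c s) Hq:] = [:[:c:]:] + [:Hq:] * [:pcompose s Hq:]"
    by (simp add: pcompose_pCons)
  show ?case unfolding eq by (rule gen_alg.add[OF ga_cst2 gen_alg.mult[OF gen_alg.gen2 pCons.IH]])
qed

lemma ga_N: "(\<And>j. [:coeff Q j:] \<in> gen_alg (N :: 'k::comm_ring_1 mpoly3) g h) \<Longrightarrow> pcompose Q N \<in> gen_alg N g h"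
proof (induction Q)
  case 0 then show ?case using ga_0 by simp
next
  case (pCons c Q)
  have "[:coeff Q j:] \<in> gen_alg N g h" for j using pCons(3)[of "Suc j"] by simp
  then have "pcompose Q N \<in> gen_alg N g h" using pCons by blast
  moreover have "[:c:] \<in> gen_alg N g h" using pCons(3)[of 0] by simp
  ultimately show ?case unfolding pcompose_pCons by (metis gen_alg.add gen_alg.mult gen_alg.gen1)
qed

definition good :: "'k::comm_ring_1 mpoly3 \<Rightarrow> bool" where
  "good Q \<longleftrightarrow> (\<forall>j. \<exists>s. coeff Q j = pcompose s Hq)"

lemma good_const: "good [:pcompose s Hq:]"
  unfolding good_def
proof
  fix j show "\<exists>s'. coeff [:pcompose s Hq:] j = pcompose s' Hq"
    by (cases j) (auto intro: exI[of _ s] exI[of _ 0])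
qed

lemma good_add: "good P \<Longrightarrow> good Q \<Longrightarrow> good (P + Q)"
  unfolding good_def by (metis coeff_add pcompose_add)

lemma good_mult: "good P \<Longrightarrow> good Q \<Longrightarrow> good (P * Q)"
proof -
  assume "good P" "good Q"
  then obtain S1 S2 where S1: "\<And>j. coeff P j = pcompose (S1 j) Hq" and S2: "\<And>j. coeff Q j = pcompose (S2 j) Hq"
    unfolding good_def by metis
  show "good (P * Q)" unfolding good_def
  proof
    fix j
    have "coeff (P * Q) j = pcompose (\<Sum>i\<le>j. S1 i * S2 (j - i)) Hq"
      by (simp add: coeff_mult S1 S2 pcompose_sum pcompose_mult)
    then show "\<exists>s. coeff (P * Q) j = pcompose s Hq" by blast
  qed
qed

definition Asw :: "'k::comm_ring_1 mpoly3 set" where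
  "Asw = gen_alg Nsw [:Hq:] X1"

lemma Asw_struct: "p \<in> Asw \<Longrightarrow> \<exists>Q. p = pcompose Q Nsw \<and> good Q"
  unfolding Asw_def
proof (induction rule: gen_alg.induct)
  case (cst c)
  have "cst3 c = pcompose [:pcompose [:[:c:]:] Hq:] Nsw" by (simp add: cst3_def)
  then show ?case using good_const by blast
next
  case gen1
  have "Nsw = pcompose [:0, 1:] Nsw" by (simp add: pcompose_pCons)
  moreover have "good [:0, 1:]"
    unfolding good_def
  proof
    fix j
    show "\<exists>s. coeff [:0, 1:] j = pcompose s Hq"
    proof (cases "j = 1")
      case True then show ?thesis by (intro exI[of _ 1]) (simp add: pcompose_1)
    next
      case False then have "coeff [:0, 1:] j = 0" by (cases j) (auto simp: coeff_pCons split: nat.split)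
      then show ?thesis by (intro exI[of _ 0]) simp
    qed
  qed
  ultimately show ?case by blast
next
  case gen2
  have "[:Hq:] = pcompose [:pcompose [:0,1:] Hq:] Nsw" by (simp add: pcompose_pCons)
  then show ?case using good_const by blast
next
  case gen3
  have "X1 = pcompose [:pcompose [:[:0,1:]:] Hq:] Nsw" by (simp add: X1_def)
  then show ?case using good_const by blast
next
  case (add p q)
  then obtain P Q where "p = pcompose P Nsw" "good P" "q = pcompose Q Nsw" "good Q" by blast
  then show ?case using good_add by (metis pcompose_add)
next
  case (mult p q)
  then obtain P Q where "p = pcompose P Nsw" "good P" "q = pcompose Q Nsw" "good Q" by blast
  then show ?case using good_mult by (metis pcompose_mult)
qed



definition SW :: "(nat \<Rightarrow> nat \<Rightarrow> 'k::comm_ring_1 mpoly3) \<Rightarrow> 'k mpoly3" where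
  "SW c = (\<Sum>a<4. \<Sum>b<2. [:0,1:]^a * ([:[:0,1:]^b:] * c a b))"

lemma sw_exists:
  assumes ch: "CHAR('k::field) = 2"
  shows "\<exists>c. (\<forall>a b. c a b \<in> Asw) \<and> (P :: 'k mpoly3) = SW c"
proof -
  obtain q where q: "P = rep Nsw 4 q" using rep_exists[OF Nsw_monic[OF ch]] by fastforce
  define crd where "crd r = (if r = 0 then (\<lambda>_. 0) else SOME s. r = rep Hq 2 s)" for r :: "'k poly poly"
  have crd: "r = rep Hq 2 (crd r)" for r
  proof (cases "r = 0")
    case True then show ?thesis by (simp add: crd_def rep_def)
  next
    case False
    have "\<exists>s. r = rep Hq 2 s" using rep_exists[OF Hq_monic] by fastforce
    then show ?thesis using False unfolding crd_def using someI_ex[of "\<lambda>s. r = rep Hq 2 s"] by simp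
  qed
  define Q where "Q a b = map_poly (\<lambda>r. pcompose (crd r b) Hq) (q a)" for a b
  have coeffQ: "coeff (Q a b) j = pcompose (crd (coeff (q a) j) b) Hq" for a b j
    unfolding Q_def by (subst coeff_map_poly) (simp_all add: crd_def)
  have qa: "q a = (\<Sum>b<2. smult ([:0,1:]^b) (Q a b))" for a
  proof (rule poly_eqI)
    fix j
    have "coeff (q a) j = rep Hq 2 (crd (coeff (q a) j))" by (rule crd)
    then show "coeff (q a) j = coeff (\<Sum>b<2. smult ([:0,1:]^b) (Q a b)) j"
      by (simp add: coeff_sum coeffQ rep_def)
  qed
  define c where "c a b = pcompose (Q a b) Nsw" for a b
  have mem: "c a b \<in> Asw" for a b
    unfolding c_def Asw_def by (rule ga_N) (simp add: coeffQ ga_H)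
  have "P = SW c"
    unfolding q rep_def SW_def c_def
    by (simp add: qa pcompose_sum pcompose_smult sum_distrib_left)
  then show ?thesis using mem by blast
qed

lemma sw_unique:
  assumes ch: "CHAR('k::field) = 2"
    and mem: "\<forall>a<4. \<forall>b<2. c a b \<in> (Asw :: 'k mpoly3 set)" and z: "SW c = 0"
    and ab: "a < 4" "b < 2"
  shows "c a b = 0"
proof -
  have "\<forall>a b. \<exists>Q. a < 4 \<longrightarrow> b < 2 \<longrightarrow> c a b = pcompose Q Nsw \<and> good Q"
    using mem Asw_struct by blast
  then obtain Q where Q: "\<And>a b. a < 4 \<Longrightarrow> b < 2 \<Longrightarrow> c a b = pcompose (Q a b) Nsw \<and> good (Q a b)"
    by metis
  define qq where "qq a = (\<Sum>b<2. smult ([:0,1:]^b) (Q a b))" for a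
  have "SW c = (\<Sum>a<4. \<Sum>b<2. [:0,1:]^a * ([:[:0,1:]^b:] * pcompose (Q a b) Nsw))"
    unfolding SW_def by (intro sum.cong refl) (simp add: Q)
  also have "\<dots> = rep Nsw 4 qq"
    unfolding rep_def qq_def by (simp add: pcompose_sum pcompose_smult sum_distrib_left)
  finally have "rep Nsw 4 qq = 0" using z by simp
  then have qq0: "qq a = 0" using rep_unique[OF Nsw_monic[OF ch]] ab by simp
  have "coeff (Q a b) j = 0" for j
  proof -
    have "\<forall>b'. \<exists>s. b' < 2 \<longrightarrow> coeff (Q a b') j = pcompose s Hq"
      using Q[OF ab(1)] unfolding good_def by blast
    then obtain S where S: "\<And>b'. b' < 2 \<Longrightarrow> coeff (Q a b') j = pcompose (S b') Hq" by metis
    have "rep Hq 2 S = coeff (qq a) j"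
      unfolding rep_def qq_def by (simp add: coeff_sum S)
    then have "rep Hq 2 S = 0" using qq0 by simp
    then have "S b = 0" using rep_unique[OF Hq_monic] ab by simp
    then show ?thesis using S[OF ab(2)] by simp
  qed
  then have "Q a b = 0" by (simp add: poly_eq_iff)
  then show ?thesis using Q[OF ab] by simp
qed



lemma const_pow: "[:x:]^n = [:x^n:]"
  by (induction n) (simp_all add: one_pCons mult.commute)

lemma SW_alt: "SW c = (\<Sum>a<4. \<Sum>b<2. X3^a * (X2^b * c a b))"
  unfolding SW_def X3_def X2_def const_pow ..

definition jj :: "nat \<Rightarrow> nat \<Rightarrow> nat" where
  "jj a b = [[0,2],[1,4],[3,6],[5,7]] ! a ! b"

lemma IDL: "swap (\<Sum>i<8. d i * basis8 ! i) = SW (\<lambda>a b. swap (d (jj a b)))"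
  unfolding SW_alt basis8_def jj_def
  by (simp add: is_homD[OF swap_hom] is_hom_sum[OF swap_hom] is_hom_pow[OF swap_hom] eval_nat_numeral ac_simps)

lemma SW_cong: "(\<And>a b. a < 4 \<Longrightarrow> b < 2 \<Longrightarrow> f a b = g a b) \<Longrightarrow> SW f = SW g"
  unfolding SW_def by (intro sum.cong refl) simp

lemma algA_Asw: "p \<in> algA \<Longrightarrow> swap p \<in> (Asw :: 'k::comm_ring_1 mpoly3 set)"
  unfolding algA_def Asw_def Nsw_def
  using ga_hom[OF swap_hom swap_cst, of p norm_x1 "X2 * (X2 + X3)" X3] by (simp add: swap_h)

lemma Asw_algA: "p \<in> Asw \<Longrightarrow> swap p \<in> (algA :: 'k::comm_ring_1 mpoly3 set)"
proof -
  assume "p \<in> Asw"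
  then have "swap p \<in> gen_alg (swap Nsw) (swap [:Hq:]) (swap X1)"
    unfolding Asw_def by (rule ga_hom[OF swap_hom swap_cst])
  moreover have "swap [:Hq:] = (X2 * (X2 + X3) :: 'k mpoly3)"
    using swap_h[where 'k='k] swap_swap by metis
  ultimately show ?thesis unfolding algA_def Nsw_def by simp
qed

definition ia :: "nat \<Rightarrow> nat" where "ia i = [0,1,0,2,1,3,2,3] ! i"
definition ib :: "nat \<Rightarrow> nat" where "ib i = [0,0,1,0,1,0,1,1] ! i"

lemma lt4: "(a::nat) < 4 \<Longrightarrow> a = 0 \<or> a = 1 \<or> a = 2 \<or> a = 3" by auto
lemma lt2: "(b::nat) < 2 \<Longrightarrow> b = 0 \<or> b = 1" by auto
lemma lt8: "(i::nat) < 8 \<Longrightarrow> i = 0 \<or> i = 1 \<or> i = 2 \<or> i = 3 \<or> i = 4 \<or> i = 5 \<or> i = 6 \<or> i = 7" by auto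

lemma jj_props: "a < 4 \<Longrightarrow> b < 2 \<Longrightarrow> jj a b < 8 \<and> ia (jj a b) = a \<and> ib (jj a b) = b"
  using lt4[of a] lt2[of b] by (auto simp: jj_def ia_def ib_def)

lemma ia_props: "i < 8 \<Longrightarrow> ia i < 4 \<and> ib i < 2 \<and> jj (ia i) (ib i) = i"
  using lt8[of i] by (auto simp: jj_def ia_def ib_def)

theorem proposition4p19:
  fixes dummy :: "'k::field itself"
  assumes "CHAR('k) = 2"
  shows "K 4 = (UNIV :: 'k mpoly3 set) \<and>
    (\<forall>p \<in> (K 4 :: 'k mpoly3 set). \<exists>!c :: nat \<Rightarrow> 'k mpoly3.
        (\<forall>i<8. c i \<in> algA) \<and> (\<forall>i\<ge>8. c i = 0) \<and>
        p = (\<Sum>i<8. c i * basis8 ! i))"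
proof -
  have ex: "\<exists>c :: nat \<Rightarrow> 'k mpoly3. (\<forall>i<8. c i \<in> algA) \<and> (\<forall>i\<ge>8. c i = 0) \<and>
        p = (\<Sum>i<8. c i * basis8 ! i)" for p :: "'k mpoly3"
  proof -
    obtain e where e: "\<forall>a b. e a b \<in> Asw" "swap p = SW e" using sw_exists[OF assms] by blast
    define d where "d i = (if i < 8 then swap (e (ia i) (ib i)) else 0)" for i
    have dA: "\<forall>i<8. d i \<in> algA" using e(1) Asw_algA unfolding d_def by auto
    have d8: "\<forall>i\<ge>8. d i = 0" unfolding d_def by simp
    have "swap (\<Sum>i<8. d i * basis8 ! i) = SW (\<lambda>a b. swap (d (jj a b)))" by (rule IDL)
    also have "\<dots> = SW e" by (rule SW_cong) (simp add: d_def jj_props)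
    finally have "swap (swap (\<Sum>i<8. d i * basis8 ! i)) = swap (swap p)" using e(2) by simp
    then have "p = (\<Sum>i<8. d i * basis8 ! i)" by simp
    then show ?thesis using dA d8 by blast
  qed
  have uq: "c1 = c2" if c1: "(\<forall>i<8. c1 i \<in> algA) \<and> (\<forall>i\<ge>8. c1 i = 0) \<and> p = (\<Sum>i<8. c1 i * basis8 ! i)"
    and c2: "(\<forall>i<8. c2 i \<in> algA) \<and> (\<forall>i\<ge>8. c2 i = 0) \<and> p = (\<Sum>i<8. c2 i * basis8 ! i)"
    for p :: "'k mpoly3" and c1 c2
  proof -
    define d where "d i = c1 i - c2 i" for i
    have dA: "d i \<in> algA" if "i < 8" for i using c1 c2 that unfolding d_def algA_def by (simp add: ga_diff)
    have "(\<Sum>i<8. d i * basis8 ! i) = 0"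
      using c1 c2 unfolding d_def by (simp add: left_diff_distrib sum_subtractf)
    then have "SW (\<lambda>a b. swap (d (jj a b))) = 0"
      using IDL[of d] is_homD(3)[OF swap_hom] by metis
    moreover have "\<forall>a<4. \<forall>b<2. swap (d (jj a b)) \<in> Asw"
      using dA algA_Asw jj_props by blast
    ultimately have z: "swap (d (jj a b)) = 0" if "a < 4" "b < 2" for a b
      using sw_unique[OF assms, of "\<lambda>a b. swap (d (jj a b))"] that by blast
    show "c1 = c2"
    proof
      fix i
      show "c1 i = c2 i"
      proof (cases "i < 8")
        case True
        then have "swap (d i) = 0" using z ia_props by metis
        then have "d i = 0" using swap_swap[of "d i"] is_homD(3)[OF swap_hom] by metis
        then show ?thesis unfolding d_def by simp
      next
        case False then show ?thesis using c1 c2 by simp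
      qed
    qed
  qed
  show ?thesis
  proof
    show "K 4 = (UNIV :: 'k mpoly3 set)" by (rule K4[OF assms])
    show "\<forall>p \<in> (K 4 :: 'k mpoly3 set). \<exists>!c :: nat \<Rightarrow> 'k mpoly3.
        (\<forall>i<8. c i \<in> algA) \<and> (\<forall>i\<ge>8. c i = 0) \<and> p = (\<Sum>i<8. c i * basis8 ! i)"
    proof
      fix p :: "'k mpoly3"
      show "\<exists>!c :: nat \<Rightarrow> 'k mpoly3.
        (\<forall>i<8. c i \<in> algA) \<and> (\<forall>i\<ge>8. c i = 0) \<and> p = (\<Sum>i<8. c i * basis8 ! i)"
        using ex[of p] uq[of _ p] by blast
    qed
  qed
qed

end
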